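(* Let $T\subset\mathbb{R}^2$ be (the open domain bounded by) a triangle with angles $\alpha\le\beta\le\gamma$. Then \[ A_T\ge\frac{1}{\sin\frac{\alpha}{2}}+\frac{1}{\sin\frac{\beta}{2}}. \]
   Context: For a domain $G\subsetneq\mathbb{R}^n$ let $d_G(x)=d(x,\partial G)$. The quasihyperbolic length of a rectifiable curve $\gamma\subset G$ is $\ell_k(\gamma)=\int_\gamma\frac{|dx|}{d_G(x)}$, and the quasihyperbolic distance is $k_G(x,y)=\inf\ell_k(\gamma)$ over rectifiable curves $\gamma\subset G$ joining $x$ and $y$. The distance ratio metric is $j_G(x,y)=\log\left(1+\frac{|x-y|}{\min\{d_G(x),d_G(y)\}}\right)$. The uniformity constant is $A_G=\inf\{A\ge1: k_G(x,y)\le A\,j_G(x,y)\text{ for all }x,y\in G\}$ (with $\inf\emptyset=+\infty$); $G$ is uniform if $A_G<\infty$. *)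

theory Defs
  imports "HOL-Analysis.Analysis"
begin

definition bdist :: "'a::euclidean_space set \<Rightarrow> 'a \<Rightarrow> real" where
  "bdist G x = infdist x (frontier G)"

definition is_partition :: "(nat \<Rightarrow> real) \<Rightarrow> nat \<Rightarrow> real \<Rightarrow> real \<Rightarrow> bool" where
  "is_partition t m a b \<longleftrightarrow> t 0 = a \<and> t m = b \<and> (\<forall>i<m. t i \<le> t (Suc i))"

definition poly_lengths :: "(real \<Rightarrow> 'a::euclidean_space) \<Rightarrow> real \<Rightarrow> real \<Rightarrow> real set" where
  "poly_lengths g a b =
     {\<Sum>i<m. norm (g (t (Suc i)) - g (t i)) | t m. is_partition t m a b}"

definition rectifiable_path :: "(real \<Rightarrow> 'a::euclidean_space) \<Rightarrow> bool" where
  "rectifiable_path g \<longleftrightarrow> path g \<and> bdd_above (poly_lengths g 0 1)"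

definition curve_length :: "(real \<Rightarrow> 'a::euclidean_space) \<Rightarrow> real \<Rightarrow> real \<Rightarrow> real" where
  "curve_length g a b = Sup (poly_lengths g a b)"

text \<open>Quasihyperbolic length \<open>\<integral>_g |dx|/d_G(x)\<close>, the arc-length (Riemann--Stieltjes)
  integral of the continuous positive function 1/d_G along g, defined as the supremum
  of lower Darboux--Stieltjes sums with respect to arc length.\<close>
definition qh_length :: "'a::euclidean_space set \<Rightarrow> (real \<Rightarrow> 'a) \<Rightarrow> real" where
  "qh_length G g = Sup {\<Sum>i<m. (INF s\<in>{t i..t (Suc i)}. 1 / bdist G (g s))
                               * curve_length g (t i) (t (Suc i)) | t m. is_partition t m 0 1}"

definition qh_dist :: "'a::euclidean_space set \<Rightarrow> 'a \<Rightarrow> 'a \<Rightarrow> real" where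
  "qh_dist G x y = (INF g\<in>{g. rectifiable_path g \<and> path_image g \<subseteq> G \<and>
                                pathstart g = x \<and> pathfinish g = y}. qh_length G g)"

definition j_dist :: "'a::euclidean_space set \<Rightarrow> 'a \<Rightarrow> 'a \<Rightarrow> real" where
  "j_dist G x y = ln (1 + dist x y / min (bdist G x) (bdist G y))"

text \<open>Uniformity constant, with Inf {} = \<infinity> in the extended reals.\<close>
definition unif_const :: "'a::euclidean_space set \<Rightarrow> ereal" where
  "unif_const G = Inf {ereal A | A. A \<ge> 1 \<and>
                     (\<forall>x\<in>G. \<forall>y\<in>G. qh_dist G x y \<le> A * j_dist G x y)}"

definition vertex_angle :: "'a::euclidean_space \<Rightarrow> 'a \<Rightarrow> 'a \<Rightarrow> real" where
  "vertex_angle q p r = arccos (((q - p) \<bullet> (r - p)) / (norm (q - p) * norm (r - p)))"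

end

theory Submission
  imports Defs
begin


lemma part_concat:
  assumes "is_partition t1 m1 a b" "is_partition t2 m2 b c"
  shows "is_partition (\<lambda>i. if i \<le> m1 then t1 i else t2 (i - m1)) (m1 + m2) a c"
    and "(\<Sum>i<m1+m2. F ((\<lambda>i. if i \<le> m1 then t1 i else t2 (i - m1)) i) ((\<lambda>i. if i \<le> m1 then t1 i else t2 (i - m1)) (Suc i)))
         = (\<Sum>i<m1. F (t1 i) (t1 (Suc i))) + (\<Sum>i<m2. F (t2 i) (t2 (Suc i)))"
proof -
  let ?t = "\<lambda>i. if i \<le> m1 then t1 i else t2 (i - m1)"
  show "is_partition ?t (m1 + m2) a c"
    using assms unfolding is_partition_def
    apply (auto simp: not_le)
    subgoal for i by (subgoal_tac "i = m1") auto
    subgoal for i by (subgoal_tac "Suc i - m1 = Suc (i - m1)") auto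
    done
  have "(\<Sum>i<m1+m2. F (?t i) (?t (Suc i))) = (\<Sum>i<m1. F (?t i) (?t (Suc i))) + (\<Sum>i<m2. F (?t (m1+i)) (?t (Suc (m1+i))))"
    by (induction m2) (simp_all add: ac_simps)
  also have "(\<Sum>i<m1. F (?t i) (?t (Suc i))) = (\<Sum>i<m1. F (t1 i) (t1 (Suc i)))"
    by (rule sum.cong) auto
  also have "(\<Sum>i<m2. F (?t (m1+i)) (?t (Suc (m1+i)))) = (\<Sum>i<m2. F (t2 i) (t2 (Suc i)))"
    using assms(1,2) unfolding is_partition_def
    by (intro sum.cong) (auto simp: Suc_diff_le)
  finally show "(\<Sum>i<m1+m2. F (?t i) (?t (Suc i))) = (\<Sum>i<m1. F (t1 i) (t1 (Suc i))) + (\<Sum>i<m2. F (t2 i) (t2 (Suc i)))" .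
qed



lemma poly_chord: "a \<le> b \<Longrightarrow> norm (g b - g a) \<in> poly_lengths g a b"
  unfolding poly_lengths_def is_partition_def
  by (rule CollectI, rule exI[of _ "\<lambda>i. if i = 0 then a else b"], rule exI[of _ 1]) auto

lemma poly_concat:
  assumes "x \<in> poly_lengths g a b" "y \<in> poly_lengths g b c"
  shows "x + y \<in> poly_lengths g a c"
proof -
  from assms obtain t1 m1 t2 m2 where p: "is_partition t1 m1 a b" "is_partition t2 m2 b c"
    and x: "x = (\<Sum>i<m1. norm (g (t1 (Suc i)) - g (t1 i)))"
    and y: "y = (\<Sum>i<m2. norm (g (t2 (Suc i)) - g (t2 i)))"
    unfolding poly_lengths_def by blast
  define t where "t = (\<lambda>i. if i \<le> m1 then t1 i else t2 (i - m1))"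
  have pc1: "is_partition t (m1 + m2) a c" using part_concat(1)[OF p] unfolding t_def .
  have pc2: "(\<Sum>i<m1+m2. norm (g (t (Suc i)) - g (t i))) = x + y"
    using part_concat(2)[OF p, where F = "\<lambda>u v. norm (g v - g u)"] unfolding t_def x y by simp
  show ?thesis unfolding poly_lengths_def
    using pc1 pc2[symmetric] by blast
qed

lemma poly_nonneg: "x \<in> poly_lengths g a b \<Longrightarrow> 0 \<le> x"
  unfolding poly_lengths_def by (auto intro: sum_nonneg)

lemma cl_split:
  assumes "a \<le> b" "b \<le> c" "bdd_above (poly_lengths g a c)"
  shows "bdd_above (poly_lengths g a b)" "bdd_above (poly_lengths g b c)"
    "curve_length g a b + curve_length g b c \<le> curve_length g a c"
proof -
  obtain B where B: "\<And>z. z \<in> poly_lengths g a c \<Longrightarrow> z \<le> B" using assms(3) unfolding bdd_above_def by blast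
  have ne1: "poly_lengths g a b \<noteq> {}" and ne2: "poly_lengths g b c \<noteq> {}"
    using poly_chord assms(1,2) by blast+
  show b1: "bdd_above (poly_lengths g a b)"
    unfolding bdd_above_def
  proof (intro exI ballI)
    fix x assume x: "x \<in> poly_lengths g a b"
    obtain y where y: "y \<in> poly_lengths g b c" using ne2 by blast
    have "x + y \<le> B" using B poly_concat[OF x y] by blast
    then show "x \<le> B" using poly_nonneg[OF y] by linarith
  qed
  show b2: "bdd_above (poly_lengths g b c)"
    unfolding bdd_above_def
  proof (intro exI ballI)
    fix y assume y: "y \<in> poly_lengths g b c"
    obtain x where x: "x \<in> poly_lengths g a b" using ne1 by blast
    have "x + y \<le> B" using B poly_concat[OF x y] by blast
    then show "y \<le> B" using poly_nonneg[OF x] by linarith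
  qed
  have ne3: "poly_lengths g a c \<noteq> {}" using poly_chord[of a c g] assms(1,2) by auto
  have "\<forall>x\<in>poly_lengths g a b. \<forall>y\<in>poly_lengths g b c. x + y \<le> curve_length g a c"
    unfolding curve_length_def using poly_concat assms(3) by (meson cSup_upper)
  then have "\<forall>x\<in>poly_lengths g a b. x \<le> curve_length g a c - curve_length g b c"
  proof (intro ballI)
    fix x assume x: "x \<in> poly_lengths g a b"
    assume h: "\<forall>x\<in>poly_lengths g a b. \<forall>y\<in>poly_lengths g b c. x + y \<le> curve_length g a c"
    have "\<forall>y\<in>poly_lengths g b c. y \<le> curve_length g a c - x" using h x by fastforce
    then have "curve_length g b c \<le> curve_length g a c - x"
      unfolding curve_length_def[of g b c] using ne2 by (intro cSup_least) auto
    then show "x \<le> curve_length g a c - curve_length g b c" by linarith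
  qed
  then have "curve_length g a b \<le> curve_length g a c - curve_length g b c"
    unfolding curve_length_def[of g a b] using ne1 by (intro cSup_least) auto
  then show "curve_length g a b + curve_length g b c \<le> curve_length g a c" by linarith
qed

lemma cl_chord:
  assumes "a \<le> b" "bdd_above (poly_lengths g a b)"
  shows "norm (g b - g a) \<le> curve_length g a b"
  unfolding curve_length_def using poly_chord[OF assms(1)] assms(2) by (rule cSup_upper)

lemma cl_nonneg:
  assumes "a \<le> b" "bdd_above (poly_lengths g a b)"
  shows "0 \<le> curve_length g a b"
  using cl_chord[OF assms] norm_ge_zero order_trans by blast

lemma part_mono: "is_partition t m a b \<Longrightarrow> i \<le> j \<Longrightarrow> j \<le> m \<Longrightarrow> t i \<le> t j"
proof (induction j)
  case 0 then show ?case by simp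
next
  case (Suc j)
  then show ?case unfolding is_partition_def
    by (metis Suc_le_eq le_Suc_eq less_imp_le_nat order_trans order_refl)
qed

lemma cl_sum:
  assumes "is_partition t m a b" "bdd_above (poly_lengths g a b)"
  shows "(\<Sum>i<m. curve_length g (t i) (t (Suc i))) \<le> curve_length g a b"
  using assms
proof (induction m arbitrary: b)
  case 0
  then have "b = a" unfolding is_partition_def by simp
  then show ?case using cl_nonneg[of a a g] 0 by simp
next
  case (Suc m)
  have p: "is_partition t m a (t m)" using Suc.prems(1) unfolding is_partition_def by auto
  have le1: "a \<le> t m" "t m \<le> b" using part_mono[OF Suc.prems(1), of 0 m] part_mono[OF Suc.prems(1), of m "Suc m"]
    Suc.prems(1) unfolding is_partition_def by auto
  note sp = cl_split[OF le1 Suc.prems(2)]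
  have "(\<Sum>i<Suc m. curve_length g (t i) (t (Suc i))) = (\<Sum>i<m. curve_length g (t i) (t (Suc i))) + curve_length g (t m) b"
    using Suc.prems(1) unfolding is_partition_def by simp
  also have "\<dots> \<le> curve_length g a (t m) + curve_length g (t m) b"
    using Suc.IH[OF p sp(1)] by simp
  also have "\<dots> \<le> curve_length g a b" using sp(3) .
  finally show ?case .
qed

lemma bdd_sub:
  assumes "rectifiable_path g" "0 \<le> a" "a \<le> b" "b \<le> 1"
  shows "bdd_above (poly_lengths g a b)"
proof -
  have "bdd_above (poly_lengths g 0 1)" using assms(1) unfolding rectifiable_path_def by simp
  then have "bdd_above (poly_lengths g a 1)" using cl_split(2)[of 0 a 1 g] assms by simp
  then show ?thesis using cl_split(1)[of a b 1 g] assms by simp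
qed



lemma hit_fwd:
  fixes f :: "real \<Rightarrow> real"
  assumes "a \<le> b" "continuous_on {a..b} f" "f a \<le> L" "L \<le> f b"
  shows "\<exists>\<tau>. a \<le> \<tau> \<and> \<tau> \<le> b \<and> f \<tau> = L \<and> (\<forall>t. a \<le> t \<and> t < \<tau> \<longrightarrow> f t < L)"
proof -
  define S where "S = {t\<in>{a..b}. L \<le> f t}"
  have cl: "closed S" unfolding S_def
    using continuous_closed_preimage[OF assms(2) closed_atLeastAtMost, of "{L..}"]
    by (simp add: vimage_def Int_def conj_commute)
  have ne: "S \<noteq> {}" using assms unfolding S_def by auto
  have bb: "bdd_below S" unfolding S_def by (auto intro: bdd_belowI[of _ a])
  define \<tau> where "\<tau> = Inf S"
  have tS: "\<tau> \<in> S" unfolding \<tau>_def using closed_contains_Inf[OF ne bb cl] .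
  have lt: "\<forall>t. a \<le> t \<and> t < \<tau> \<longrightarrow> f t < L"
  proof (intro allI impI)
    fix t assume t: "a \<le> t \<and> t < \<tau>"
    have "t \<le> b" using t tS unfolding S_def by auto
    show "f t < L"
    proof (rule ccontr)
      assume "\<not> f t < L"
      then have "t \<in> S" using t \<open>t \<le> b\<close> unfolding S_def by auto
      then have "\<tau> \<le> t" unfolding \<tau>_def using bb by (rule cInf_lower)
      then show False using t by simp
    qed
  qed
  have range: "a \<le> \<tau>" "\<tau> \<le> b" using tS unfolding S_def by auto
  have "\<exists>x. a \<le> x \<and> x \<le> \<tau> \<and> f x = L"
    using tS unfolding S_def
    by (intro IVT'[of f a L \<tau>, OF assms(3)]) (auto intro: continuous_on_subset[OF assms(2)])
  then obtain x where x: "a \<le> x" "x \<le> \<tau>" "f x = L" by blast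
  have "x = \<tau>" using lt x by (metis less_irrefl order_le_less)
  then show ?thesis using range x lt by blast
qed

lemma hit_bwd:
  fixes f :: "real \<Rightarrow> real"
  assumes "a \<le> b" "continuous_on {a..b} f" "L \<le> f a" "f b \<le> L"
  shows "\<exists>\<sigma>. a \<le> \<sigma> \<and> \<sigma> \<le> b \<and> f \<sigma> = L \<and> (\<forall>t. \<sigma> < t \<and> t \<le> b \<longrightarrow> f t < L)"
proof -
  define h where "h = (\<lambda>t. f (a + b - t))"
  have c: "continuous_on {a..b} h" unfolding h_def
    by (rule continuous_on_compose2[OF assms(2)]) (auto intro!: continuous_intros)
  obtain \<tau> where t: "a \<le> \<tau>" "\<tau> \<le> b" "h \<tau> = L" "\<forall>t. a \<le> t \<and> t < \<tau> \<longrightarrow> h t < L"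
    using hit_fwd[OF assms(1) c] assms(3,4) unfolding h_def by auto
  show ?thesis
  proof (intro exI[of _ "a + b - \<tau>"] conjI allI impI)
    fix t assume "a + b - \<tau> < t \<and> t \<le> b"
    then show "f t < L" using t(4)[rule_format, of "a + b - t"] unfolding h_def by auto
  qed (use t in \<open>auto simp: h_def\<close>)
qed



lemma core_alg:
  fixes u w :: "'a::real_inner" and x y :: real
  assumes "norm u = 1" "norm w = 1" "y \<le> x" "0 \<le> y"
  shows "0 \<le> (x *\<^sub>R u + y *\<^sub>R w) \<bullet> u"
    "(norm (x *\<^sub>R u + y *\<^sub>R w))\<^sup>2 - ((x *\<^sub>R u + y *\<^sub>R w) \<bullet> u)\<^sup>2
       \<le> (norm (x *\<^sub>R u + y *\<^sub>R w))\<^sup>2 * (1 - u \<bullet> w) / 2"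
proof -
  let ?c = "u \<bullet> w"
  have uu: "u \<bullet> u = 1" "w \<bullet> w = 1" using assms(1,2) by (simp_all add: dot_square_norm)
  have cb: "\<bar>?c\<bar> \<le> 1" using Cauchy_Schwarz_ineq2[of u w] assms by simp
  have pu: "(x *\<^sub>R u + y *\<^sub>R w) \<bullet> u = x + y * ?c"
    using uu by (simp add: inner_add_left inner_commute[of w u])
  have pp: "(norm (x *\<^sub>R u + y *\<^sub>R w))\<^sup>2 = x^2 + y^2 + 2*x*y*?c"
    unfolding power2_norm_eq_inner using uu
    by (simp add: inner_add_left inner_add_right inner_commute power2_eq_square algebra_simps)
  have yc: "- y \<le> y * ?c" using mult_left_mono[of "-1" ?c y] cb assms(4) by simp
  show "0 \<le> (x *\<^sub>R u + y *\<^sub>R w) \<bullet> u" unfolding pu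
    using yc assms(3,4) by linarith
  have key: "0 \<le> (1 - ?c)/2 * (x - y) * (x + y + 2*y*?c)"
  proof -
    have "0 \<le> x + y + 2*y*?c" using yc assms(3,4) by linarith
    then show ?thesis using cb assms(3) by (intro mult_nonneg_nonneg) auto
  qed
  have "(1 - ?c)/2 * (x - y) * (x + y + 2*y*?c) = (x + y*?c)^2 - (x^2 + y^2 + 2*x*y*?c) * (1 + ?c)/2"
    by (simp add: power2_eq_square algebra_simps divide_simps)
  with key show "(norm (x *\<^sub>R u + y *\<^sub>R w))\<^sup>2 - ((x *\<^sub>R u + y *\<^sub>R w) \<bullet> u)\<^sup>2
       \<le> (norm (x *\<^sub>R u + y *\<^sub>R w))\<^sup>2 * (1 - u \<bullet> w) / 2"
    unfolding pu pp by (simp add: algebra_simps divide_simps)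
qed

lemma seg_point:
  fixes a b z :: "'a::euclidean_space"
  assumes "b \<noteq> a" "0 \<le> (z - a) \<bullet> ((b - a) /\<^sub>R norm (b - a))" "norm (z - a) \<le> norm (b - a)"
  shows "\<exists>q\<in>closed_segment a b. (dist z q)\<^sup>2 = (norm (z - a))\<^sup>2 - ((z - a) \<bullet> ((b - a) /\<^sub>R norm (b - a)))\<^sup>2"
proof -
  define u where "u = (b - a) /\<^sub>R norm (b - a)"
  define s where "s = (z - a) \<bullet> u"
  have nu: "norm u = 1" using assms(1) by (simp add: u_def)
  have s0: "0 \<le> s" using assms(2) by (simp add: s_def u_def)
  have s1: "s \<le> norm (z - a)" unfolding s_def using norm_cauchy_schwarz[of "z-a" u] nu by simp
  define t where "t = s / norm (b - a)"
  have t01: "0 \<le> t" "t \<le> 1" using s0 s1 assms(1,3) by (auto simp: t_def divide_simps)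
  define q where "q = a + s *\<^sub>R u"
  have su: "s *\<^sub>R u = t *\<^sub>R (b - a)" by (simp add: u_def t_def divide_inverse mult.commute)
  have qe: "q = (1 - t) *\<^sub>R a + t *\<^sub>R b"
    by (simp add: q_def su algebra_simps)
  have "q \<in> closed_segment a b" unfolding qe closed_segment_def using t01 by auto
  moreover have "(dist z q)\<^sup>2 = (norm (z - a))\<^sup>2 - s\<^sup>2"
  proof -
    have e: "z - q = (z - a) - s *\<^sub>R u" by (simp add: q_def)
    have "(dist z q)\<^sup>2 = ((z - a) - s *\<^sub>R u) \<bullet> ((z - a) - s *\<^sub>R u)"
      by (simp only: dist_norm e power2_norm_eq_inner)
    also have "\<dots> = (norm (z - a))\<^sup>2 - 2 * s * s + s * s * (u \<bullet> u)"
      by (simp add: inner_diff_left inner_diff_right power2_norm_eq_inner s_def inner_commute algebra_simps)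
    also have "u \<bullet> u = 1" using nu by (simp add: dot_square_norm)
    finally show ?thesis by (simp add: power2_eq_square)
  qed
  ultimately show ?thesis unfolding s_def u_def by blast
qed



lemma noncol_distinct:
  assumes "\<not> collinear {a,b,c::'a::real_vector}"
  shows "a \<noteq> b" "a \<noteq> c" "b \<noteq> c"
  using assms by (auto simp: collinear_2 insert_commute)

lemma centroid_interior:
  fixes a b c :: "real^2"
  assumes "\<not> collinear {a,b,c}"
  shows "(1/3) *\<^sub>R a + (1/3) *\<^sub>R b + (1/3) *\<^sub>R c \<in> interior (convex hull {a,b,c})"
  unfolding interior_convex_hull_3_minimal[OF assms, of, simplified] by (simp only: mem_Collect_eq, intro exI[of _ "1/3"] conjI) auto

lemma frontier_int_tri:
  fixes a b c :: "real^2"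
  assumes "\<not> collinear {a,b,c}"
  shows "frontier (interior (convex hull {a,b,c})) = closed_segment a b \<union> closed_segment b c \<union> closed_segment c a"
proof -
  let ?H = "convex hull {a,b,c}"
  have ne: "interior ?H \<noteq> {}" using centroid_interior[OF assms] by blast
  have cl: "closed ?H" by (simp add: compact_imp_closed finite_imp_compact_convex_hull)
  have "frontier (interior ?H) = frontier ?H"
    unfolding frontier_def using convex_closure_interior[OF convex_convex_hull ne] cl
    by (simp add: closure_closed)
  then show ?thesis using frontier_of_triangle[of a b c] by simp
qed

lemma vertex_bound:
  fixes a b c z :: "real^2"
  assumes nc: "\<not> collinear {a,b,c}" and zH: "z \<in> convex hull {a,b,c}"
    and zb: "norm (z - a) \<le> norm (b - a)" and zc: "norm (z - a) \<le> norm (c - a)"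
  shows "bdist (interior (convex hull {a,b,c})) z \<le> norm (z - a) * sin (vertex_angle b a c / 2)"
proof -
  have ab: "b \<noteq> a" and ac: "c \<noteq> a" using noncol_distinct[OF nc] by auto
  obtain v w' where vw: "z = a + v *\<^sub>R (b - a) + w' *\<^sub>R (c - a)" "0 \<le> v" "0 \<le> w'"
    using zH unfolding convex_hull_3_alt by blast
  define u where "u = (b - a) /\<^sub>R norm (b - a)"
  define w where "w = (c - a) /\<^sub>R norm (c - a)"
  define X where "X = v * norm (b - a)"
  define Y where "Y = w' * norm (c - a)"
  define p where "p = z - a"
  have nu: "norm u = 1" "norm w = 1" using ab ac by (auto simp: u_def w_def)
  have p1: "p = X *\<^sub>R u + Y *\<^sub>R w" using ab ac
    by (simp add: p_def vw(1) X_def Y_def u_def w_def mult.assoc)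
  have p2: "p = Y *\<^sub>R w + X *\<^sub>R u" using p1 by (simp add: add.commute)
  have X0: "0 \<le> X" "0 \<le> Y" using vw by (auto simp: X_def Y_def)
  define cc where "cc = u \<bullet> w"
  have cce: "vertex_angle b a c = arccos cc"
    unfolding vertex_angle_def cc_def u_def w_def by (simp add: divide_inverse ac_simps)
  have cb: "\<bar>cc\<bar> \<le> 1" using Cauchy_Schwarz_ineq2[of u w] nu by (simp add: cc_def)
  let ?F = "frontier (interior (convex hull {a,b,c}))"
  have "\<exists>q\<in>?F. (dist z q)\<^sup>2 \<le> (norm p)\<^sup>2 * (1 - cc) / 2"
  proof (cases "Y \<le> X")
    case True
    note ca = core_alg[OF nu True X0(2), folded p1]
    obtain q where q: "q \<in> closed_segment a b" "(dist z q)\<^sup>2 = (norm p)\<^sup>2 - (p \<bullet> u)\<^sup>2"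
      using seg_point[OF ab] ca(1) zb unfolding p_def u_def by auto
    then show ?thesis using ca(2) frontier_int_tri[OF nc] unfolding cc_def by (intro bexI[of _ q]) auto
  next
    case False
    then have le: "X \<le> Y" by simp
    note ca = core_alg[OF nu(2,1) le X0(1), folded p2]
    obtain q where q: "q \<in> closed_segment a c" "(dist z q)\<^sup>2 = (norm p)\<^sup>2 - (p \<bullet> w)\<^sup>2"
      using seg_point[OF ac] ca(1) zc unfolding p_def w_def by auto
    have "q \<in> closed_segment c a" using q(1) closed_segment_commute by blast
    then show ?thesis using q(2) ca(2) frontier_int_tri[OF nc] unfolding cc_def by (intro bexI[of _ q]) (auto simp: inner_commute)
  qed
  then obtain q where q: "q \<in> ?F" "(dist z q)\<^sup>2 \<le> (norm p)\<^sup>2 * (1 - cc) / 2" by blast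
  define \<theta> where "\<theta> = arccos cc / 2"
  have th: "0 \<le> \<theta>" "\<theta> \<le> pi" using arccos_bounded[of cc] cb pi_gt_zero by (auto simp: \<theta>_def abs_le_iff)
  have "cos (2 * \<theta>) = cc" using cb by (simp add: \<theta>_def)
  then have s2: "(sin \<theta>)\<^sup>2 = (1 - cc) / 2" using cos_double_sin[of \<theta>] by simp
  have e2: "(norm p * sin \<theta>)\<^sup>2 = (norm p)\<^sup>2 * (1 - cc) / 2" by (simp add: power_mult_distrib s2)
  have dq: "(dist z q)\<^sup>2 \<le> (norm p * sin \<theta>)\<^sup>2" unfolding e2 using q(2) by linarith
  have sp: "0 \<le> norm p * sin \<theta>" using sin_ge_zero[OF th] by simp
  have "dist z q \<le> norm p * sin \<theta>" by (rule power2_le_imp_le[OF dq sp])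
  moreover have "bdist (interior (convex hull {a,b,c})) z \<le> dist z q"
    unfolding bdist_def using q(1) by (rule infdist_le)
  ultimately show ?thesis unfolding p_def \<theta>_def cce by simp
qed



lemma bdist_nonneg: "0 \<le> bdist G x" unfolding bdist_def by (rule infdist_nonneg)

lemma inf_nonneg:
  fixes \<alpha> \<beta> :: real
  assumes "\<alpha> \<le> \<beta>"
  shows "0 \<le> (INF s\<in>{\<alpha>..\<beta>}. 1 / bdist T (g s))"
proof -
  have "{\<alpha>..\<beta>} \<noteq> {}" using assms by simp
  then show ?thesis by (rule cINF_greatest) (simp add: bdist_nonneg)
qed

lemma inf_bdd: "bdd_below ((\<lambda>s. 1 / bdist T (g s)) ` S)"
  by (rule bdd_belowI[of _ 0]) (auto simp: bdist_nonneg)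

lemma term_nonneg:
  fixes \<alpha> \<beta> :: real
  assumes "rectifiable_path g" "0 \<le> \<alpha>" "\<alpha> \<le> \<beta>" "\<beta> \<le> 1"
  shows "0 \<le> (INF s\<in>{\<alpha>..\<beta>}. 1 / bdist T (g s)) * curve_length g \<alpha> \<beta>"
  using inf_nonneg[OF assms(3), of T g] cl_nonneg[OF assms(3) bdd_sub[OF assms]] by simp

lemma term_lb:
  fixes \<alpha> \<beta> :: real
  assumes rg: "rectifiable_path g" and ab: "0 \<le> \<alpha>" "\<alpha> \<le> \<beta>" "\<beta> \<le> 1"
    and pos: "\<forall>s\<in>{\<alpha>..\<beta>}. 0 < bdist T (g s)"
    and bnd: "\<forall>s\<in>{\<alpha>..\<beta>}. bdist T (g s) \<le> K" and K: "0 < K"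
    and ch: "D \<le> norm (g \<beta> - g \<alpha>)" and D: "0 \<le> D"
  shows "D / K \<le> (INF s\<in>{\<alpha>..\<beta>}. 1 / bdist T (g s)) * curve_length g \<alpha> \<beta>"
proof -
  have i: "1 / K \<le> (INF s\<in>{\<alpha>..\<beta>}. 1 / bdist T (g s))"
    using ab(2) pos bnd K by (intro cINF_greatest) (auto intro!: divide_left_mono)
  have c: "D \<le> curve_length g \<alpha> \<beta>"
    using ch cl_chord[OF ab(2) bdd_sub[OF rg ab]] by linarith
  have "1 / K * D \<le> (INF s\<in>{\<alpha>..\<beta>}. 1 / bdist T (g s)) * curve_length g \<alpha> \<beta>"
    using K D by (intro mult_mono[OF i c]) (auto intro: order_trans[OF _ i])
  then show ?thesis by simp
qed

lemma qh_bdd: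
  fixes g :: "real \<Rightarrow> 'a::euclidean_space"
  assumes rg: "rectifiable_path g" and img: "path_image g \<subseteq> T"
    and pos: "\<forall>z\<in>T. 0 < bdist T z"
  shows "bdd_above {\<Sum>i<m. (INF s\<in>{t i..t (Suc i)}. 1 / bdist T (g s))
                               * curve_length g (t i) (t (Suc i)) | t m. is_partition t m 0 1}"
proof -
  have pg: "path g" using rg unfolding rectifiable_path_def by simp
  have "\<exists>x\<in>path_image g. \<forall>y\<in>path_image g. bdist T x \<le> bdist T y"
    unfolding bdist_def
    by (intro continuous_attains_inf compact_path_image pg)
       (auto intro!: continuous_intros simp: path_image_nonempty)
  then obtain x0 where x0: "x0 \<in> path_image g" "\<forall>y\<in>path_image g. bdist T x0 \<le> bdist T y" by blast
  define \<delta> where "\<delta> = bdist T x0"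
  have d0: "0 < \<delta>" using x0 img pos by (auto simp: \<delta>_def)
  have dle: "\<And>s. s \<in> {0..1} \<Longrightarrow> \<delta> \<le> bdist T (g s)" using x0 unfolding \<delta>_def path_image_def by auto
  have bl: "bdd_above (poly_lengths g 0 1)" using rg unfolding rectifiable_path_def by simp
  show ?thesis
  proof (rule bdd_aboveI[of _ "curve_length g 0 1 / \<delta>"], clarify)
    fix t m assume p: "is_partition t m 0 1"
    have tr: "\<And>i. i \<le> m \<Longrightarrow> 0 \<le> t i \<and> t i \<le> 1"
      using part_mono[OF p, of 0] part_mono[OF p, of _ m] p unfolding is_partition_def by auto
    have "(\<Sum>i<m. (INF s\<in>{t i..t (Suc i)}. 1 / bdist T (g s)) * curve_length g (t i) (t (Suc i)))
       \<le> (\<Sum>i<m. (1 / \<delta>) * curve_length g (t i) (t (Suc i)))"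
    proof (rule sum_mono)
      fix i assume i: "i \<in> {..<m}"
      have ti: "t i \<le> t (Suc i)" using p i unfolding is_partition_def by auto
      have r: "0 \<le> t i" "t (Suc i) \<le> 1" using tr[of i] tr[of "Suc i"] i by auto
      have "(INF s\<in>{t i..t (Suc i)}. 1 / bdist T (g s)) \<le> 1 / bdist T (g (t i))"
        using ti by (intro cINF_lower inf_bdd) auto
      also have "\<dots> \<le> 1 / \<delta>" using dle[of "t i"] r ti d0 by (intro divide_left_mono) auto
      finally show "(INF s\<in>{t i..t (Suc i)}. 1 / bdist T (g s)) * curve_length g (t i) (t (Suc i))
           \<le> (1 / \<delta>) * curve_length g (t i) (t (Suc i))"
        using cl_nonneg[OF ti bdd_sub[OF rg r(1) ti r(2)]] by (intro mult_right_mono) auto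
    qed
    also have "\<dots> = (1 / \<delta>) * (\<Sum>i<m. curve_length g (t i) (t (Suc i)))" by (simp add: sum_distrib_left)
    also have "\<dots> \<le> (1 / \<delta>) * curve_length g 0 1"
      using cl_sum[OF p bl] d0 by (intro mult_left_mono) auto
    finally show "(\<Sum>i<m. (INF s\<in>{t i..t (Suc i)}. 1 / bdist T (g s)) * curve_length g (t i) (t (Suc i)))
       \<le> curve_length g 0 1 / \<delta>" by simp
  qed
qed

lemma sum_split_add: "(\<Sum>i<m1+m2. f i) = (\<Sum>i<m1. f i) + (\<Sum>i<m2. f (m1 + i))"
  for f :: "nat \<Rightarrow> real"
  by (induction m2) (simp_all add: ac_simps)



lemma lvl_eq:
  fixes r q s :: real
  assumes "0 < r" "1 < q" "0 < s"
  shows "(r * q ^ Suc k - r * q ^ k) / (s * (r * q ^ Suc k)) = (1 - 1/q) / s"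
  using assms by (simp add: field_simps)

lemma path_lower:
  fixes g :: "real \<Rightarrow> 'a::euclidean_space"
  assumes rg: "rectifiable_path g" and img: "path_image g \<subseteq> T"
    and pos: "\<forall>z\<in>T. 0 < bdist T z"
    and hA: "\<forall>z\<in>T. norm (z - pa) \<le> R \<longrightarrow> bdist T z \<le> sA * norm (z - pa)"
    and hB: "\<forall>z\<in>T. norm (z - pb) \<le> R \<longrightarrow> bdist T z \<le> sB * norm (z - pb)"
    and sA: "0 < sA" and sB: "0 < sB"
    and g0: "norm (g 0 - pa) \<le> r" and g1: "norm (g 1 - pb) \<le> r"
    and R2: "2 * R \<le> norm (pa - pb)"
    and q: "1 < q" and rR: "r * q ^ N = R" and r: "0 < r"
  shows "real N * (1 - 1/q) * (1/sA + 1/sB) \<le> qh_length T g"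
proof -
  have pg: "path g" using rg unfolding rectifiable_path_def by simp
  have cg: "continuous_on {0..1} g" using pg unfolding path_def .
  define fA where "fA t = norm (g t - pa)" for t
  define fB where "fB t = norm (g t - pb)" for t
  have cA: "continuous_on {0..1} fA" unfolding fA_def by (intro continuous_intros cg)
  have cB: "continuous_on {0..1} fB" unfolding fB_def by (intro continuous_intros cg)
  define L where "L k = r * q ^ k" for k
  have Lpos: "0 < L k" for k using r q by (simp add: L_def)
  have Lmono: "k \<le> k' \<Longrightarrow> L k \<le> L k'" for k k'
    using r q by (auto simp: L_def intro!: mult_left_mono power_increasing)
  have Lsuc: "L k < L (Suc k)" for k using r q Lpos[of k] by (simp add: L_def)
  have L0: "L 0 = r" and LN: "L N = R" using rR by (auto simp: L_def)
  have gT: "s \<in> {0..1} \<Longrightarrow> g s \<in> T" for s using img unfolding path_image_def by auto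
  have rR': "r \<le> R" using Lmono[of 0 N] L0 LN by simp
  have tri: "norm (pa - pb) \<le> fA s + fB s" for s
    unfolding fA_def fB_def using norm_triangle_ineq4[of "g s - pb" "g s - pa"]
    by (simp add: norm_minus_commute)
  have fA1: "R \<le> fA 1" using tri[of 1] g1 R2 rR' unfolding fB_def by simp
  have "\<forall>k. \<exists>\<tau>. 1 \<le> k \<and> k \<le> N \<longrightarrow> (0 \<le> \<tau> \<and> \<tau> \<le> 1 \<and> fA \<tau> = L k \<and> (\<forall>t. 0 \<le> t \<and> t < \<tau> \<longrightarrow> fA t < L k))"
  proof
    fix k
    show "\<exists>\<tau>. 1 \<le> k \<and> k \<le> N \<longrightarrow> (0 \<le> \<tau> \<and> \<tau> \<le> 1 \<and> fA \<tau> = L k \<and> (\<forall>t. 0 \<le> t \<and> t < \<tau> \<longrightarrow> fA t < L k))"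
    proof (cases "1 \<le> k \<and> k \<le> N")
      case True
      have "fA 0 \<le> L k" using g0 Lmono[of 0 k] L0 unfolding fA_def by simp
      moreover have "L k \<le> fA 1" using Lmono[of k N] True LN fA1 by simp
      ultimately show ?thesis using hit_fwd[of 0 1 fA "L k"] cA by auto
    qed (intro exI[of _ 0]; auto)
  qed
  then obtain \<tau>0 where \<tau>0: "\<And>k. 1 \<le> k \<Longrightarrow> k \<le> N \<Longrightarrow>
      0 \<le> \<tau>0 k \<and> \<tau>0 k \<le> 1 \<and> fA (\<tau>0 k) = L k \<and> (\<forall>t. 0 \<le> t \<and> t < \<tau>0 k \<longrightarrow> fA t < L k)"
    using choice[of "\<lambda>k \<tau>. 1 \<le> k \<and> k \<le> N \<longrightarrow> (0 \<le> \<tau> \<and> \<tau> \<le> 1 \<and> fA \<tau> = L k \<and> (\<forall>t. 0 \<le> t \<and> t < \<tau> \<longrightarrow> fA t < L k))"]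
    by blast
  define \<tau> where "\<tau> k = (if k = 0 then 0 else \<tau>0 k)" for k
  have tr: "k \<le> N \<Longrightarrow> 0 \<le> \<tau> k \<and> \<tau> k \<le> 1" for k using \<tau>0[of k] by (auto simp: \<tau>_def)
  have tle: "k \<le> N \<Longrightarrow> fA (\<tau> k) \<le> L k" for k
    using \<tau>0[of k] g0 L0 by (auto simp: \<tau>_def fA_def)
  have teq: "1 \<le> k \<Longrightarrow> k \<le> N \<Longrightarrow> fA (\<tau> k) = L k" for k using \<tau>0[of k] by (auto simp: \<tau>_def)
  have tlt: "1 \<le> k \<Longrightarrow> k \<le> N \<Longrightarrow> 0 \<le> t \<Longrightarrow> t < \<tau> k \<Longrightarrow> fA t < L k" for k t
    using \<tau>0[of k] by (auto simp: \<tau>_def)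
  have tmono: "k < N \<Longrightarrow> \<tau> k \<le> \<tau> (Suc k)" for k
  proof (rule ccontr)
    assume k: "k < N" and n: "\<not> \<tau> k \<le> \<tau> (Suc k)"
    then have k1: "k \<noteq> 0" using tr[of "Suc k"] by (auto simp: \<tau>_def split: if_splits)
    have "fA (\<tau> (Suc k)) < L k" using tlt[of k "\<tau> (Suc k)"] k k1 n tr[of "Suc k"] by auto
    then show False using teq[of "Suc k"] k Lsuc[of k] by simp
  qed
  have tbnd: "k < N \<Longrightarrow> s \<in> {\<tau> k..\<tau> (Suc k)} \<Longrightarrow> fA s \<le> L (Suc k)" for k s
  proof -
    assume k: "k < N" and s: "s \<in> {\<tau> k..\<tau> (Suc k)}"
    show "fA s \<le> L (Suc k)"
    proof (cases "s = \<tau> (Suc k)")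
      case True then show ?thesis using teq[of "Suc k"] k by simp
    next
      case False
      then show ?thesis using tlt[of "Suc k" s] s k tr[of k] by auto
    qed
  qed
  define T0 where "T0 = \<tau> N"
  have T01: "0 \<le> T0" "T0 \<le> 1" using tr[of N] by (auto simp: T0_def)
  have fBT0: "R \<le> fB T0" using tri[of T0] tle[of N] LN R2 unfolding T0_def by simp
  have fB1: "fB 1 \<le> r" using g1 by (simp add: fB_def)
  have cB': "continuous_on {T0..1} fB" using T01 by (intro continuous_on_subset[OF cB]) auto
  have "\<forall>k. \<exists>\<sigma>. 1 \<le> k \<and> k \<le> N \<longrightarrow> (T0 \<le> \<sigma> \<and> \<sigma> \<le> 1 \<and> fB \<sigma> = L k \<and> (\<forall>t. \<sigma> < t \<and> t \<le> 1 \<longrightarrow> fB t < L k))"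
  proof
    fix k
    show "\<exists>\<sigma>. 1 \<le> k \<and> k \<le> N \<longrightarrow> (T0 \<le> \<sigma> \<and> \<sigma> \<le> 1 \<and> fB \<sigma> = L k \<and> (\<forall>t. \<sigma> < t \<and> t \<le> 1 \<longrightarrow> fB t < L k))"
    proof (cases "1 \<le> k \<and> k \<le> N")
      case True
      have "fB 1 \<le> L k" using fB1 Lmono[of 0 k] L0 by simp
      moreover have "L k \<le> fB T0" using Lmono[of k N] True LN fBT0 by simp
      ultimately show ?thesis using hit_bwd[of T0 1 fB "L k"] cB' T01 by auto
    qed (intro exI[of _ 0]; auto)
  qed
  then obtain \<sigma>0 where \<sigma>0: "\<And>k. 1 \<le> k \<Longrightarrow> k \<le> N \<Longrightarrow>
      T0 \<le> \<sigma>0 k \<and> \<sigma>0 k \<le> 1 \<and> fB (\<sigma>0 k) = L k \<and> (\<forall>t. \<sigma>0 k < t \<and> t \<le> 1 \<longrightarrow> fB t < L k)"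
    using choice[of "\<lambda>k \<sigma>. 1 \<le> k \<and> k \<le> N \<longrightarrow> (T0 \<le> \<sigma> \<and> \<sigma> \<le> 1 \<and> fB \<sigma> = L k \<and> (\<forall>t. \<sigma> < t \<and> t \<le> 1 \<longrightarrow> fB t < L k))"]
    by blast
  define \<sigma> where "\<sigma> k = (if k = 0 then 1 else \<sigma>0 k)" for k
  have sr: "k \<le> N \<Longrightarrow> T0 \<le> \<sigma> k \<and> \<sigma> k \<le> 1" for k using \<sigma>0[of k] T01 by (auto simp: \<sigma>_def)
  have sle: "k \<le> N \<Longrightarrow> fB (\<sigma> k) \<le> L k" for k
    using \<sigma>0[of k] fB1 L0 by (auto simp: \<sigma>_def)
  have seq: "1 \<le> k \<Longrightarrow> k \<le> N \<Longrightarrow> fB (\<sigma> k) = L k" for k using \<sigma>0[of k] by (auto simp: \<sigma>_def)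
  have slt: "1 \<le> k \<Longrightarrow> k \<le> N \<Longrightarrow> \<sigma> k < t \<Longrightarrow> t \<le> 1 \<Longrightarrow> fB t < L k" for k t
    using \<sigma>0[of k] by (auto simp: \<sigma>_def)
  have smono: "k < N \<Longrightarrow> \<sigma> (Suc k) \<le> \<sigma> k" for k
  proof (rule ccontr)
    assume k: "k < N" and n: "\<not> \<sigma> (Suc k) \<le> \<sigma> k"
    then have k1: "k \<noteq> 0" using sr[of "Suc k"] by (auto simp: \<sigma>_def split: if_splits)
    have "fB (\<sigma> (Suc k)) < L k" using slt[of k "\<sigma> (Suc k)"] k k1 n sr[of "Suc k"] by auto
    then show False using seq[of "Suc k"] k Lsuc[of k] by simp
  qed
  have sbnd: "k < N \<Longrightarrow> s \<in> {\<sigma> (Suc k)..\<sigma> k} \<Longrightarrow> fB s \<le> L (Suc k)" for k s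
  proof -
    assume k: "k < N" and s: "s \<in> {\<sigma> (Suc k)..\<sigma> k}"
    show "fB s \<le> L (Suc k)"
    proof (cases "s = \<sigma> (Suc k)")
      case True then show ?thesis using seq[of "Suc k"] k by simp
    next
      case False
      then show ?thesis using slt[of "Suc k" s] s k sr[of k] by auto
    qed
  qed
  define t where "t i = (if i \<le> N then \<tau> i else \<sigma> (2*N+1-i))" for i
  have part: "is_partition t (2*N+1) 0 1"
    unfolding is_partition_def
  proof (intro conjI allI impI)
    show "t 0 = 0" by (simp add: t_def \<tau>_def)
    show "t (2*N+1) = 1" by (simp add: t_def \<sigma>_def)
    fix i assume i: "i < 2*N+1"
    show "t i \<le> t (Suc i)"
    proof (cases "i < N")
      case True then show ?thesis using tmono[of i] by (simp add: t_def)
    next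
      case False
      show ?thesis
      proof (cases "i = N")
        case True
        then show ?thesis using sr[of N] by (simp add: t_def T0_def)
      next
        case False
        define k where "k = 2*N - i"
        have k: "k < N" "2*N+1-i = Suc k" "2*N+1 - Suc i = k" using i False \<open>\<not> i < N\<close> by (auto simp: k_def)
        then show ?thesis using smono[of k] False \<open>\<not> i < N\<close> by (simp add: t_def)
      qed
    qed
  qed
  define trm where "trm i = (INF s\<in>{t i..t (Suc i)}. 1 / bdist T (g s)) * curve_length g (t i) (t (Suc i))" for i
  define c where "c = 1 - 1/q"
  have posg: "\<forall>s\<in>{\<alpha>..\<beta>}. 0 < bdist T (g s)" if "0 \<le> \<alpha>" "\<beta> \<le> 1" for \<alpha> \<beta> :: real
    using gT pos that by auto
  have lbA: "c / sA \<le> trm i" if i: "i < N" for i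
  proof -
    have ti: "t i = \<tau> i" "t (Suc i) = \<tau> (Suc i)" using i by (auto simp: t_def)
    have ab: "0 \<le> \<tau> i" "\<tau> i \<le> \<tau> (Suc i)" "\<tau> (Suc i) \<le> 1" using tr[of i] tr[of "Suc i"] tmono[of i] i by auto
    have bnd: "\<forall>s\<in>{\<tau> i..\<tau> (Suc i)}. bdist T (g s) \<le> sA * L (Suc i)"
    proof
      fix s assume s: "s \<in> {\<tau> i..\<tau> (Suc i)}"
      have f: "fA s \<le> L (Suc i)" using tbnd[OF i s] .
      have "g s \<in> T" using gT s ab by auto
      moreover have "norm (g s - pa) \<le> R" using f Lmono[of "Suc i" N] i LN by (simp add: fA_def)
      ultimately have "bdist T (g s) \<le> sA * fA s" using hA by (simp add: fA_def)
      also have "\<dots> \<le> sA * L (Suc i)" using f sA by simp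
      finally show "bdist T (g s) \<le> sA * L (Suc i)" .
    qed
    have ch: "L (Suc i) - L i \<le> norm (g (\<tau> (Suc i)) - g (\<tau> i))"
      using teq[of "Suc i"] tle[of i] i norm_triangle_ineq[of "g (\<tau> (Suc i)) - g (\<tau> i)" "g (\<tau> i) - pa"]
      unfolding fA_def by simp
    have "(L (Suc i) - L i) / (sA * L (Suc i)) \<le> trm i"
      unfolding trm_def ti
      using term_lb[OF rg ab posg[OF ab(1) ab(3)] bnd _ ch] sA Lpos[of "Suc i"] Lsuc[of i] by simp
    moreover have "(L (Suc i) - L i) / (sA * L (Suc i)) = c / sA"
      unfolding L_def c_def using lvl_eq[OF r q sA] by simp
    ultimately show ?thesis by simp
  qed
  have lbB: "c / sB \<le> trm (N + Suc j)" if j: "j < N" for j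
  proof -
    define k where "k = N - Suc j"
    have k: "k < N" using j by (simp add: k_def)
    have ti: "t (N + Suc j) = \<sigma> (Suc k)" "t (Suc (N + Suc j)) = \<sigma> k"
      using j by (auto simp: t_def k_def Suc_diff_Suc)
    have ab: "0 \<le> \<sigma> (Suc k)" "\<sigma> (Suc k) \<le> \<sigma> k" "\<sigma> k \<le> 1"
      using sr[of k] sr[of "Suc k"] smono[of k] k T01 by auto
    have bnd: "\<forall>s\<in>{\<sigma> (Suc k)..\<sigma> k}. bdist T (g s) \<le> sB * L (Suc k)"
    proof
      fix s assume s: "s \<in> {\<sigma> (Suc k)..\<sigma> k}"
      have f: "fB s \<le> L (Suc k)" using sbnd[OF k s] .
      have "g s \<in> T" using gT s ab by auto
      moreover have "norm (g s - pb) \<le> R" using f Lmono[of "Suc k" N] k LN by (simp add: fB_def)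
      ultimately have "bdist T (g s) \<le> sB * fB s" using hB by (simp add: fB_def)
      also have "\<dots> \<le> sB * L (Suc k)" using f sB by simp
      finally show "bdist T (g s) \<le> sB * L (Suc k)" .
    qed
    have ch: "L (Suc k) - L k \<le> norm (g (\<sigma> k) - g (\<sigma> (Suc k)))"
      using seq[of "Suc k"] sle[of k] k norm_triangle_ineq[of "g (\<sigma> (Suc k)) - g (\<sigma> k)" "g (\<sigma> k) - pb"]
      unfolding fB_def by (simp add: norm_minus_commute)
    have "(L (Suc k) - L k) / (sB * L (Suc k)) \<le> trm (N + Suc j)"
      unfolding trm_def ti
      using term_lb[OF rg ab posg[OF ab(1) ab(3)] bnd _ ch] sB Lpos[of "Suc k"] Lsuc[of k] by simp
    moreover have "(L (Suc k) - L k) / (sB * L (Suc k)) = c / sB"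
      unfolding L_def c_def using lvl_eq[OF r q sB] by simp
    ultimately show ?thesis by simp
  qed
  have lbM: "0 \<le> trm N"
  proof -
    have "t N = T0" "t (Suc N) = \<sigma> N" by (auto simp: t_def T0_def)
    then show ?thesis unfolding trm_def using term_nonneg[OF rg T01(1)] sr[of N] by simp
  qed
  have "(\<Sum>i<2*N+1. trm i) = (\<Sum>i<N. trm i) + (\<Sum>j<Suc N. trm (N + j))"
  proof -
    have "2*N+1 = N + Suc N" by simp
    then show ?thesis using sum_split_add[of trm N "Suc N"] by (simp only:)
  qed
  also have "(\<Sum>j<Suc N. trm (N + j)) = trm N + (\<Sum>j<N. trm (N + Suc j))"
    by (simp only: sum.lessThan_Suc_shift) simp
  finally have sp: "(\<Sum>i<2*N+1. trm i) = (\<Sum>i<N. trm i) + trm N + (\<Sum>j<N. trm (N + Suc j))" by simp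
  have s1: "real N * (c / sA) \<le> (\<Sum>i<N. trm i)"
    using sum_mono[of "{..<N}" "\<lambda>_. c / sA" trm] lbA by simp
  have s2: "real N * (c / sB) \<le> (\<Sum>j<N. trm (N + Suc j))"
    using sum_mono[of "{..<N}" "\<lambda>_. c / sB" "\<lambda>j. trm (N + Suc j)"] lbB by simp
  have tot: "real N * (c / sA) + real N * (c / sB) \<le> (\<Sum>i<2*N+1. trm i)"
    using sp s1 s2 lbM by linarith
  have mem: "(\<Sum>i<2*N+1. trm i) \<in> {\<Sum>i<m. (INF s\<in>{t i..t (Suc i)}. 1 / bdist T (g s))
                               * curve_length g (t i) (t (Suc i)) | t m. is_partition t m 0 1}"
    unfolding trm_def using part by blast
  have "(\<Sum>i<2*N+1. trm i) \<le> qh_length T g"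
    unfolding qh_length_def by (rule cSup_upper[OF mem qh_bdd[OF rg img pos]])
  moreover have "real N * (1 - 1/q) * (1/sA + 1/sB) = real N * (c / sA) + real N * (c / sB)"
    using sA sB q by (simp add: c_def field_simps)
  ultimately show ?thesis using tot by linarith
qed



lemma linepath_rect:
  fixes x y :: "'a::euclidean_space"
  shows "rectifiable_path (linepath x y)"
  unfolding rectifiable_path_def
proof
  show "path (linepath x y)" by simp
  show "bdd_above (poly_lengths (linepath x y) 0 1)"
  proof (rule bdd_aboveI[of _ "norm (y - x)"], unfold poly_lengths_def, clarify)
    fix t m assume p: "is_partition t m 0 1"
    have "(\<Sum>i<m. norm (linepath x y (t (Suc i)) - linepath x y (t i)))
        = (\<Sum>i<m. (t (Suc i) - t i) * norm (y - x))"
    proof (rule sum.cong)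
      fix i assume "i \<in> {..<m}"
      then have le: "t i \<le> t (Suc i)" using p unfolding is_partition_def by auto
      have "linepath x y (t (Suc i)) - linepath x y (t i) = (t (Suc i) - t i) *\<^sub>R (y - x)"
        by (simp add: linepath_def algebra_simps)
      then show "norm (linepath x y (t (Suc i)) - linepath x y (t i)) = (t (Suc i) - t i) * norm (y - x)"
        using le by simp
    qed simp
    also have "\<dots> = (t m - t 0) * norm (y - x)"
      by (simp add: sum_distrib_right[symmetric] sum_lessThan_telescope)
    also have "\<dots> = norm (y - x)" using p unfolding is_partition_def by simp
    finally show "(\<Sum>i<m. norm (linepath x y (t (Suc i)) - linepath x y (t i))) \<le> norm (y - x)" by simp
  qed
qed

lemma infdist_ge_ball:
  assumes "A \<noteq> {}" "\<forall>z\<in>A. e \<le> dist x z"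
  shows "e \<le> infdist x A"
  unfolding infdist_def using assms by (auto intro!: cINF_greatest)

lemma ball_in_tri:
  fixes a m :: "real^2" and H :: "(real^2) set"
  assumes "convex H" "a \<in> H" "ball m d \<subseteq> H" "0 < l" "l \<le> 1"
  shows "ball (a + l *\<^sub>R (m - a)) (l * d) \<subseteq> interior H"
proof (rule interior_maximal[OF _ open_ball], rule subsetI)
  fix v assume v: "v \<in> ball (a + l *\<^sub>R (m - a)) (l * d)"
  define w where "w = a + (1/l) *\<^sub>R (v - a)"
  have "m - w = (1/l) *\<^sub>R ((a + l *\<^sub>R (m - a)) - v)"
  proof -
    have e1: "(1/l) *\<^sub>R (l *\<^sub>R (m - a)) = m - a" using assms(4) by simp
    have "(1/l) *\<^sub>R ((a + l *\<^sub>R (m - a)) - v) = (1/l) *\<^sub>R (a - v) + (1/l) *\<^sub>R (l *\<^sub>R (m - a))"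
      by (simp only: scaleR_right_diff_distrib scaleR_right_distrib) (use assms(4) in \<open>simp add: algebra_simps\<close>)
    also have "\<dots> = (1/l) *\<^sub>R (a - v) + (m - a)" by (simp only: e1)
    finally show ?thesis using assms(4) by (simp add: w_def algebra_simps)
  qed
  then have "dist m w = (1/l) * dist (a + l *\<^sub>R (m - a)) v" using assms(4)
    by (simp add: dist_norm)
  also have "\<dots> < (1/l) * (l * d)" using v assms(4) by (intro mult_strict_left_mono) auto
  also have "\<dots> = d" using assms(4) by simp
  finally have "w \<in> H" using assms(3) by auto
  have e2: "l *\<^sub>R ((1/l) *\<^sub>R (v - a)) = v - a" using assms(4) by simp
  have "v = (1 - l) *\<^sub>R a + l *\<^sub>R w" using assms(4) by (simp add: w_def scaleR_right_distrib e2 algebra_simps)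
  then show "v \<in> H" using convexD[OF assms(1) assms(2) \<open>w \<in> H\<close>, of "1 - l" l] assms(4,5) by simp
qed



theorem theorem1p7:
  fixes a b c :: "real^2"
  assumes "\<not> collinear {a, b, c}"
    and "vertex_angle b a c \<le> vertex_angle a b c"
    and "vertex_angle a b c \<le> vertex_angle a c b"
  shows "unif_const (interior (convex hull {a, b, c}))
           \<ge> ereal (1 / sin (vertex_angle b a c / 2) + 1 / sin (vertex_angle a b c / 2))"
proof -
  note nc = assms(1)
  define H where "H = convex hull {a, b, c}"
  define T where "T = interior H"
  define sA where "sA = sin (vertex_angle b a c / 2)"
  define sB where "sB = sin (vertex_angle a b c / 2)"
  define S where "S = 1 / sA + 1 / sB"
  have ab: "a \<noteq> b" "a \<noteq> c" "b \<noteq> c" using noncol_distinct[OF nc] by auto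
  have cvH: "convex H" unfolding H_def by simp
  have aH: "a \<in> H" "b \<in> H" unfolding H_def by (auto intro: hull_inc)
  have TH: "T \<subseteq> H" unfolding T_def by (rule interior_subset)
  have oT: "open T" unfolding T_def by simp
  have cvT: "convex T" unfolding T_def using cvH by (rule convex_interior)
  have fr: "frontier T = closed_segment a b \<union> closed_segment b c \<union> closed_segment c a"
    unfolding T_def H_def by (rule frontier_int_tri[OF nc])
  have frne: "frontier T \<noteq> {}" using fr by auto
  have pos: "\<forall>z\<in>T. 0 < bdist T z"
  proof
    fix z assume z: "z \<in> T"
    have "z \<notin> frontier T" using z oT by (simp add: frontier_def interior_open)
    then show "0 < bdist T z" unfolding bdist_def
      by (intro infdist_pos_not_in_closed frontier_closed frne)
  qed
  define R0 where "R0 = min (norm (a - b) / 2) (min (norm (a - c)) (norm (b - c)))"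
  have R0p: "0 < R0" using ab by (simp add: R0_def)
  have R0ab: "2 * R0 \<le> norm (a - b)" by (simp add: R0_def)
  have hA: "\<forall>z\<in>T. norm (z - a) \<le> R0 \<longrightarrow> bdist T z \<le> sA * norm (z - a)"
  proof (intro ballI impI)
    fix z assume z: "z \<in> T" and zr: "norm (z - a) \<le> R0"
    have h: "norm (z - a) \<le> norm (a - b) / 2" "norm (z - a) \<le> norm (a - c)"
      using zr by (auto simp: R0_def)
    have e: "norm (b - a) = norm (a - b)" "norm (c - a) = norm (a - c)" by (rule norm_minus_commute)+
    have "norm (z - a) \<le> norm (b - a)" using h(1) e(1) norm_ge_zero[of "z - a"] by linarith
    moreover have "norm (z - a) \<le> norm (c - a)" using h(2) e(2) by linarith
    ultimately show "bdist T z \<le> sA * norm (z - a)"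
      using vertex_bound[OF nc, of z] z TH unfolding T_def H_def sA_def by (auto simp: mult.commute)
  qed
  have nc': "\<not> collinear {b, a, c}" using nc by (simp add: insert_commute)
  have Heq: "convex hull {b, a, c} = H" unfolding H_def by (simp add: insert_commute)
  have hB: "\<forall>z\<in>T. norm (z - b) \<le> R0 \<longrightarrow> bdist T z \<le> sB * norm (z - b)"
  proof (intro ballI impI)
    fix z assume z: "z \<in> T" and zr: "norm (z - b) \<le> R0"
    have h: "norm (z - b) \<le> norm (a - b) / 2" "norm (z - b) \<le> norm (b - c)"
      using zr by (auto simp: R0_def)
    have e: "norm (c - b) = norm (b - c)" by (rule norm_minus_commute)
    have "norm (z - b) \<le> norm (a - b)" using h(1) norm_ge_zero[of "z - b"] by linarith
    moreover have "norm (z - b) \<le> norm (c - b)" using h(2) e by linarith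
    ultimately show "bdist T z \<le> sB * norm (z - b)"
      using vertex_bound[OF nc', of z] z TH Heq unfolding T_def sB_def by (auto simp: mult.commute)
  qed
  define m where "m = (1/3) *\<^sub>R a + (1/3) *\<^sub>R b + (1/3) *\<^sub>R c"
  have mT: "m \<in> T" unfolding m_def T_def H_def by (rule centroid_interior[OF nc])
  obtain \<delta> where d: "0 < \<delta>" "ball m \<delta> \<subseteq> T" using oT mT open_contains_ball by blast
  define M where "M = max (norm (m - a)) (norm (m - b))"
  have abM: "norm (a - b) \<le> 2 * M"
    using norm_triangle_ineq4[of "m - b" "m - a"] by (simp add: M_def norm_minus_commute)
  have R0M: "R0 \<le> M" using R0ab abM by linarith
  have Mp: "0 < M" using R0p R0M by linarith
  define D where "D = norm (a - b) + norm (m - a) + norm (m - b)"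
  have near: "\<And>l. 0 < l \<Longrightarrow> l \<le> 1 \<Longrightarrow>
      a + l *\<^sub>R (m - a) \<in> T \<and> l * \<delta> \<le> bdist T (a + l *\<^sub>R (m - a)) \<and>
      b + l *\<^sub>R (m - b) \<in> T \<and> l * \<delta> \<le> bdist T (b + l *\<^sub>R (m - b))"
  proof -
    fix l :: real assume l: "0 < l" "l \<le> 1"
    have bH: "ball m \<delta> \<subseteq> H" using d TH by auto
    have B1: "ball (a + l *\<^sub>R (m - a)) (l * \<delta>) \<subseteq> T"
      unfolding T_def by (rule ball_in_tri[OF cvH aH(1) bH l])
    have B2: "ball (b + l *\<^sub>R (m - b)) (l * \<delta>) \<subseteq> T"
      unfolding T_def by (rule ball_in_tri[OF cvH aH(2) bH l])
    have ld: "0 < l * \<delta>" using l d by simp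
    have fT: "\<And>z. z \<in> frontier T \<Longrightarrow> z \<notin> T" using oT by (simp add: frontier_def interior_open)
    have g1: "l * \<delta> \<le> bdist T (a + l *\<^sub>R (m - a))" unfolding bdist_def
    proof (rule infdist_ge_ball[OF frne], rule ballI)
      fix z assume "z \<in> frontier T"
      then have "z \<notin> ball (a + l *\<^sub>R (m - a)) (l * \<delta>)" using fT B1 by blast
      then show "l * \<delta> \<le> dist (a + l *\<^sub>R (m - a)) z" by simp
    qed
    have g2: "l * \<delta> \<le> bdist T (b + l *\<^sub>R (m - b))" unfolding bdist_def
    proof (rule infdist_ge_ball[OF frne], rule ballI)
      fix z assume "z \<in> frontier T"
      then have "z \<notin> ball (b + l *\<^sub>R (m - b)) (l * \<delta>)" using fT B2 by blast
      then show "l * \<delta> \<le> dist (b + l *\<^sub>R (m - b)) z" by simp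
    qed
    show "a + l *\<^sub>R (m - a) \<in> T \<and> l * \<delta> \<le> bdist T (a + l *\<^sub>R (m - a)) \<and>
      b + l *\<^sub>R (m - b) \<in> T \<and> l * \<delta> \<le> bdist T (b + l *\<^sub>R (m - b))"
      using B1 B2 g1 g2 ld by auto
  qed
  have sApos: "0 < sA"
  proof -
    define l where "l = R0 / M"
    have l: "0 < l" "l \<le> 1" using R0p Mp R0M by (auto simp: l_def)
    note nr = near[OF l]
    have "norm (a + l *\<^sub>R (m - a) - a) = l * norm (m - a)" using l by simp
    also have "\<dots> \<le> l * M" using l by (intro mult_left_mono) (auto simp: M_def)
    also have "\<dots> = R0" using Mp by (simp add: l_def)
    finally have "bdist T (a + l *\<^sub>R (m - a)) \<le> sA * norm (a + l *\<^sub>R (m - a) - a)"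
      using hA nr by blast
    moreover have "0 < bdist T (a + l *\<^sub>R (m - a))" using pos nr by blast
    ultimately show ?thesis by (smt (verit) mult_nonpos_nonneg norm_ge_zero)
  qed
  have sBpos: "0 < sB"
  proof -
    define l where "l = R0 / M"
    have l: "0 < l" "l \<le> 1" using R0p Mp R0M by (auto simp: l_def)
    note nr = near[OF l]
    have "norm (b + l *\<^sub>R (m - b) - b) = l * norm (m - b)" using l by simp
    also have "\<dots> \<le> l * M" using l by (intro mult_left_mono) (auto simp: M_def)
    also have "\<dots> = R0" using Mp by (simp add: l_def)
    finally have "bdist T (b + l *\<^sub>R (m - b)) \<le> sB * norm (b + l *\<^sub>R (m - b) - b)"
      using hB nr by blast
    moreover have "0 < bdist T (b + l *\<^sub>R (m - b))" using pos nr by blast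
    ultimately show ?thesis by (smt (verit) mult_nonpos_nonneg norm_ge_zero)
  qed
  have Spos: "0 < S" unfolding S_def using sApos sBpos by (intro add_pos_pos) auto
  have main: "S \<le> A" if A1: "1 \<le> A" and hyp: "\<forall>x\<in>T. \<forall>y\<in>T. qh_dist T x y \<le> A * j_dist T x y" for A
  proof (rule ccontr)
    assume "\<not> S \<le> A"
    then have AS: "A < S" by simp
    define q where "q = (1 + S / A) / 2"
    have q1: "1 < q" using AS A1 by (simp add: q_def field_simps)
    have qS: "A * q < S" using AS A1 by (simp add: q_def field_simps)
    define c1 where "c1 = (1 - 1/q) * S - A * ln q"
    have c1p: "0 < c1"
    proof -
      have "ln q \<le> q - 1" using q1 by (intro ln_le_minus_one) simp
      then have "A * ln q \<le> A * (q - 1)" using A1 by (intro mult_left_mono) auto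
      moreover have "A * (q - 1) < (1 - 1/q) * S"
      proof -
        have Aq: "A < S / q" using qS q1 by (simp add: field_simps)
        have h1: "A * (q - 1) < (S / q) * (q - 1)" using Aq q1 by (intro mult_strict_right_mono) auto
        have h2: "(S / q) * (q - 1) = (1 - 1/q) * S" using q1 by (simp add: field_simps)
        show ?thesis using h1 h2 by simp
      qed
      ultimately show ?thesis unfolding c1_def by linarith
    qed
    define K where "K = D * M / (\<delta> * R0)"
    have Kp: "0 \<le> K" using d R0p Mp by (simp add: K_def D_def)
    define N where "N = nat \<lceil>A * ln (1 + K) / c1\<rceil> + 1"
    have N: "A * ln (1 + K) < real N * c1"
    proof -
      have "A * ln (1 + K) / c1 < real N" unfolding N_def by linarith
      then show ?thesis using c1p by (simp add: field_simps)
    qed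
    define r where "r = R0 / q ^ N"
    have qN: "1 \<le> q ^ N" using q1 by simp
    have rp: "0 < r" using R0p q1 by (simp add: r_def)
    have rR: "r * q ^ N = R0" using q1 by (simp add: r_def)
    define l where "l = r / M"
    have lp: "0 < l" "l \<le> 1"
    proof -
      show "0 < l" using rp Mp by (simp add: l_def)
      have "r \<le> R0" using rR qN R0p rp by (metis mult_le_cancel_left1 less_le_not_le)
      then show "l \<le> 1" using R0M Mp by (simp add: l_def)
    qed
    define x where "x = a + l *\<^sub>R (m - a)"
    define y where "y = b + l *\<^sub>R (m - b)"
    note nr = near[OF lp, folded x_def y_def]
    have xa: "norm (x - a) \<le> r"
    proof -
      have "norm (x - a) = l * norm (m - a)" using lp by (simp add: x_def)
      also have "\<dots> \<le> l * M" using lp by (intro mult_left_mono) (auto simp: M_def)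
      finally show ?thesis using Mp by (simp add: l_def)
    qed
    have yb: "norm (y - b) \<le> r"
    proof -
      have "norm (y - b) = l * norm (m - b)" using lp by (simp add: y_def)
      also have "\<dots> \<le> l * M" using lp by (intro mult_left_mono) (auto simp: M_def)
      finally show ?thesis using Mp by (simp add: l_def)
    qed
    have lower: "real N * (1 - 1/q) * S \<le> qh_dist T x y"
      unfolding qh_dist_def
    proof (rule cINF_greatest)
      have "path_image (linepath x y) \<subseteq> T"
        using nr cvT by (simp add: closed_segment_subset)
      then show "{g. rectifiable_path g \<and> path_image g \<subseteq> T \<and> pathstart g = x \<and> pathfinish g = y} \<noteq> {}"
        using linepath_rect[of x y] by (intro ex_in_conv[THEN iffD1] exI[of _ "linepath x y"]) auto
    next
      fix g assume "g \<in> {g. rectifiable_path g \<and> path_image g \<subseteq> T \<and> pathstart g = x \<and> pathfinish g = y}"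
      then have g: "rectifiable_path g" "path_image g \<subseteq> T" "g 0 = x" "g 1 = y"
        by (auto simp: pathstart_def pathfinish_def)
      show "real N * (1 - 1/q) * S \<le> qh_length T g"
        using path_lower[OF g(1,2) pos hA hB sApos sBpos _ _ R0ab q1 rR rp] g(3,4) xa yb
        unfolding S_def by simp
    qed
    have dxy: "dist x y \<le> D"
    proof -
      have "x - y = (a - b) + l *\<^sub>R (m - a) - l *\<^sub>R (m - b)" by (simp add: x_def y_def algebra_simps)
      then have e1: "dist x y = norm ((a - b) + l *\<^sub>R (m - a) - l *\<^sub>R (m - b))" by (simp add: dist_norm)
      have e2: "norm ((a - b) + l *\<^sub>R (m - a) - l *\<^sub>R (m - b)) \<le> norm ((a - b) + l *\<^sub>R (m - a)) + norm (l *\<^sub>R (m - b))" by (rule norm_triangle_ineq4)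
      have e3: "norm ((a - b) + l *\<^sub>R (m - a)) \<le> norm (a - b) + norm (l *\<^sub>R (m - a))" by (rule norm_triangle_ineq)
      have e4: "norm (l *\<^sub>R (m - a)) \<le> norm (m - a)"
        using lp mult_left_le_one_le[of "norm (m - a)" l] by simp
      have e5: "norm (l *\<^sub>R (m - b)) \<le> norm (m - b)"
        using lp mult_left_le_one_le[of "norm (m - b)" l] by simp
      show ?thesis unfolding D_def using e1 e2 e3 e4 e5 by linarith
    qed
    have mn: "l * \<delta> \<le> min (bdist T x) (bdist T y)" using nr by simp
    have ldp: "0 < l * \<delta>" using lp d by simp
    have "j_dist T x y \<le> ln (1 + D / (l * \<delta>))"
      unfolding j_dist_def
    proof (rule ln_mono)
      show "0 < 1 + dist x y / min (bdist T x) (bdist T y)" using ldp mn by (simp add: add_pos_nonneg)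
      have "dist x y / min (bdist T x) (bdist T y) \<le> D / min (bdist T x) (bdist T y)"
        using dxy ldp mn by (intro divide_right_mono) auto
      also have "\<dots> \<le> D / (l * \<delta>)"
        using ldp mn dxy by (intro divide_left_mono) (auto intro: order_trans[OF zero_le_dist])
      finally show "1 + dist x y / min (bdist T x) (bdist T y) \<le> 1 + D / (l * \<delta>)" by simp
    qed
    also have "D / (l * \<delta>) = K * q ^ N"
      using d R0p Mp q1 by (simp add: K_def l_def r_def field_simps)
    also have "ln (1 + K * q ^ N) \<le> ln ((1 + K) * q ^ N)"
      using Kp qN by (intro ln_mono) (auto simp: algebra_simps intro: add_pos_nonneg)
    also have "\<dots> = ln (1 + K) + real N * ln q"
      using Kp q1 by (simp add: ln_mult_pos ln_realpow)
    finally have jb: "j_dist T x y \<le> ln (1 + K) + real N * ln q" .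
    have "qh_dist T x y \<le> A * j_dist T x y" using hyp nr by blast
    also have "\<dots> \<le> A * (ln (1 + K) + real N * ln q)" using jb A1 by (intro mult_left_mono) auto
    finally have "real N * (1 - 1/q) * S \<le> A * ln (1 + K) + A * (real N * ln q)"
      using lower by (simp add: algebra_simps)
    then have "real N * c1 \<le> A * ln (1 + K)" unfolding c1_def by (simp add: algebra_simps)
    then show False using N by linarith
  qed
  show ?thesis
    unfolding unif_const_def
  proof (rule Inf_greatest, clarify)
    fix A assume "1 \<le> A" "\<forall>x\<in>interior (convex hull {a, b, c}). \<forall>y\<in>interior (convex hull {a, b, c}).
        qh_dist (interior (convex hull {a, b, c})) x y \<le> A * j_dist (interior (convex hull {a, b, c})) x y"
    then have "S \<le> A" using main unfolding T_def H_def by blast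
    then show "ereal (1 / sin (vertex_angle b a c / 2) + 1 / sin (vertex_angle a b c / 2)) \<le> ereal A"
      unfolding S_def sA_def sB_def by simp
  qed
qed


end
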